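(* The thresholding algorithm with $t$ thresholds cannot achieve an approximation factor better than $1-\left(1-\frac{1}{t+1}\right)^t$. Precisely: let $t\ge1$ be an integer and $\varepsilon>0$. Then there is $k_0$ such that for every integer $k\ge k_0$ and all reals $c_1\ge c_2\ge\dots\ge c_t>0$, there exist a finite ground set $V$, a monotone submodular $f:2^V\to\mathbb{R}_{\ge0}$ with $OPT:=\max_{A\subseteq V,|A|\le k}f(A)>0$, and an execution of the thresholding algorithm with thresholds $\alpha_\ell=c_\ell\,\frac{OPT}{k}$ ($1\le \ell\le t$) whose output $G$ satisfies $f(G)\le\left(1-\left(1-\frac{1}{t+1}\right)^t+\varepsilon\right)OPT$.
   Context: A function $f:2^V\to\mathbb{R}_{\ge0}$ is submodular if $f(A\cup\{e\})-f(A)\ge f(B\cup\{e\})-f(B)$ for all $A\subseteq B\subseteq V$ and $e\notin B$, and monotone if $f(A\cup\{e\})-f(A)\ge 0$ for all $A$ and $e\notin A$. Write $f_A(e)=f(A\cup\{e\})-f(A)$. The thresholding algorithm with cardinality bound $k$ and thresholds $\alpha_1\ge\alpha_2\ge\dots\ge\alpha_t>0$ (which may be chosen with knowledge of $OPT$ and $k$): start with $G=\emptyset$; for $\ell=1,\dots,t$ in turn, as long as $|G|<k$ and some $e\in V\setminus G$ has $f_G(e)\ge\alpha_\ell$, add one such element $e$ to $G$ (the choice among eligible elements, i.e. the processing order, is arbitrary); when no such element exists or $|G|=k$, move to the next threshold. Output $G$. An execution is any run consistent with these rules. *)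

theory Defs
  imports Complex_Main
begin

definition marg :: "('a set \<Rightarrow> real) \<Rightarrow> 'a set \<Rightarrow> 'a \<Rightarrow> real" where
  "marg f A e = f (A \<union> {e}) - f A"

definition nonneg_set_fun :: "'a set \<Rightarrow> ('a set \<Rightarrow> real) \<Rightarrow> bool" where
  "nonneg_set_fun V f \<longleftrightarrow> (\<forall>A. A \<subseteq> V \<longrightarrow> f A \<ge> 0)"

definition submodular :: "'a set \<Rightarrow> ('a set \<Rightarrow> real) \<Rightarrow> bool" where
  "submodular V f \<longleftrightarrow>
     (\<forall>A B e. A \<subseteq> B \<and> B \<subseteq> V \<and> e \<in> V \<and> e \<notin> B \<longrightarrow> marg f A e \<ge> marg f B e)"

definition monotone_sf :: "'a set \<Rightarrow> ('a set \<Rightarrow> real) \<Rightarrow> bool" where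
  "monotone_sf V f \<longleftrightarrow> (\<forall>A e. A \<subseteq> V \<and> e \<in> V \<and> e \<notin> A \<longrightarrow> marg f A e \<ge> 0)"

definition opt_val :: "'a set \<Rightarrow> ('a set \<Rightarrow> real) \<Rightarrow> nat \<Rightarrow> real" where
  "opt_val V f k = Max (f ` {A. A \<subseteq> V \<and> card A \<le> k})"

text \<open>States of the thresholding algorithm: (current threshold index l, current set G).
  Thresholds are alpha 1, ..., alpha t; index t+1 means termination.\<close>
inductive thr_step :: "'a set \<Rightarrow> ('a set \<Rightarrow> real) \<Rightarrow> nat \<Rightarrow> nat \<Rightarrow> (nat \<Rightarrow> real)
    \<Rightarrow> nat \<times> 'a set \<Rightarrow> nat \<times> 'a set \<Rightarrow> bool"
  for V f k t alpha where
  add: "\<lbrakk>1 \<le> l; l \<le> t; card G < k; e \<in> V - G; marg f G e \<ge> alpha l\<rbrakk>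
        \<Longrightarrow> thr_step V f k t alpha (l, G) (l, insert e G)"
| advance: "\<lbrakk>1 \<le> l; l \<le> t; \<not> (card G < k \<and> (\<exists>e\<in>V - G. marg f G e \<ge> alpha l))\<rbrakk>
        \<Longrightarrow> thr_step V f k t alpha (l, G) (Suc l, G)"

definition thr_output :: "'a set \<Rightarrow> ('a set \<Rightarrow> real) \<Rightarrow> nat \<Rightarrow> nat \<Rightarrow> (nat \<Rightarrow> real)
    \<Rightarrow> 'a set \<Rightarrow> bool" where
  "thr_output V f k t alpha G \<longleftrightarrow> (thr_step V f k t alpha)\<^sup>*\<^sup>* (1, {}) (Suc t, G)"

end

theory Submission
  imports Defs "HOL-Analysis.Analysis"
begin

definition nst :: "nat \<Rightarrow> nat \<Rightarrow> real \<Rightarrow> real \<Rightarrow> nat" where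
  "nst k p X cc = (if X > 1 - cc then 0 else min (k - p) (nat \<lfloor>(1 - cc - X) * real k / cc\<rfloor> + 1))"

locale cons =
  fixes c :: "nat \<Rightarrow> real" and k t :: nat
  assumes cmono: "\<And>l. 1 \<le> l \<Longrightarrow> l < t \<Longrightarrow> c (Suc l) \<le> c l"
    and ct: "c t > 0" and k2: "k \<ge> 2"
begin

lemma c_anti: assumes "l \<le> l'" "1 \<le> l" "l' \<le> t" shows "c l' \<le> c l"
  using assms
proof (induction l' rule: dec_induct)
  case base then show ?case by simp
next
  case (step n) then show ?case using cmono[of n] by linarith
qed

lemma cpos: "1 \<le> l \<Longrightarrow> l \<le> t \<Longrightarrow> c l > 0"
  using c_anti[of l t] ct by linarith

fun st :: "nat \<Rightarrow> nat \<times> real" where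
  "st 0 = (0, 0)"
| "st (Suc l) = (fst (st l) + nst k (fst (st l)) (snd (st l)) (c (Suc l)),
     snd (st l) + real (nst k (fst (st l)) (snd (st l)) (c (Suc l))) * c (Suc l) / real k)"

definition cnt where "cnt l = fst (st l)"
definition Xs where "Xs l = snd (st l)"
definition nn where "nn l = nst k (cnt (l - 1)) (Xs (l - 1)) (c l)"

lemma cnt0[simp]: "cnt 0 = 0" and Xs0[simp]: "Xs 0 = 0"
  by (simp_all add: cnt_def Xs_def)

lemma cntS: "cnt (Suc l) = cnt l + nn (Suc l)"
  and XsS: "Xs (Suc l) = Xs l + real (nn (Suc l)) * c (Suc l) / real k"
  by (simp_all add: cnt_def Xs_def nn_def)

lemma cnt_le_k: "cnt l \<le> k"
proof (induction l)
  case 0 then show ?case by simp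
next
  case (Suc l) then show ?case by (auto simp: cntS nn_def nst_def)
qed

lemma cnt_mono: "l \<le> l' \<Longrightarrow> cnt l \<le> cnt l'"
  by (induction l' rule: dec_induct) (auto simp: cntS)

lemma Xs_mono: "l \<le> l' \<Longrightarrow> l' \<le> t \<Longrightarrow> Xs l \<le> Xs l'"
proof (induction l' rule: dec_induct)
  case base then show ?case by simp
next
  case (step n)
  have "c (Suc n) > 0" using cpos[of "Suc n"] step by simp
  then have "real (nn (Suc n)) * c (Suc n) / real k \<ge> 0" by (intro divide_nonneg_nonneg mult_nonneg_nonneg) auto
  then show ?case using step by (simp add: XsS)
qed

lemma factA:
  assumes "nn (Suc l) > 0" "c (Suc l) > 0"
  shows "Xs (Suc l) \<le> 1 - c (Suc l) + c (Suc l) / real k"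
proof -
  let ?cc = "c (Suc l)" and ?X = "Xs l"
  have nx: "\<not> ?X > 1 - ?cc" using assms(1) by (auto simp: nn_def nst_def)
  define q where "q = (1 - ?cc - ?X) * real k / ?cc"
  have q0: "q \<ge> 0" using nx assms(2) k2 by (simp add: q_def)
  have "nn (Suc l) \<le> nat \<lfloor>q\<rfloor> + 1" using nx by (simp add: nn_def nst_def q_def)
  then have "real (nn (Suc l)) \<le> q + 1" using q0
  proof -
    have "real (nat \<lfloor>q\<rfloor>) = of_int \<lfloor>q\<rfloor>" using q0 by simp
    then show ?thesis using \<open>nn (Suc l) \<le> nat \<lfloor>q\<rfloor> + 1\<close> of_int_floor_le[of q]
      by (smt (verit) of_nat_1 of_nat_add of_nat_mono)
  qed
  then have "real (nn (Suc l)) * ?cc / real k \<le> (q + 1) * ?cc / real k"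
    using assms(2) k2 by (simp add: divide_right_mono mult_right_mono)
  also have "\<dots> = (1 - ?cc - ?X) + ?cc / real k" using assms(2) k2
    by (simp add: q_def field_simps)
  finally show ?thesis by (simp add: XsS)
qed

lemma factB:
  assumes "cnt (Suc l) < k" "c (Suc l) > 0"
  shows "Xs (Suc l) > 1 - c (Suc l)"
proof (cases "Xs l > 1 - c (Suc l)")
  case True
  then have "nn (Suc l) = 0" by (simp add: nn_def nst_def)
  then show ?thesis using True by (simp add: XsS)
next
  case False
  let ?cc = "c (Suc l)" and ?X = "Xs l"
  define q where "q = (1 - ?cc - ?X) * real k / ?cc"
  have q0: "q \<ge> 0" using False assms(2) k2 by (simp add: q_def)
  have "nn (Suc l) = min (k - cnt l) (nat \<lfloor>q\<rfloor> + 1)" using False by (simp add: nn_def nst_def q_def)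
  moreover have "nn (Suc l) < k - cnt l" using assms(1) cnt_le_k[of l] by (simp add: cntS)
  ultimately have e: "nn (Suc l) = nat \<lfloor>q\<rfloor> + 1" by linarith
  have "real (nn (Suc l)) > q" using q0
  proof -
    have "real (nat \<lfloor>q\<rfloor>) = of_int \<lfloor>q\<rfloor>" using q0 by simp
    moreover have "real (nn (Suc l)) = real (nat \<lfloor>q\<rfloor>) + 1" using e by simp
    ultimately show ?thesis using real_of_int_floor_add_one_gt[of q] by linarith
  qed
  then have "real (nn (Suc l)) * ?cc / real k > q * ?cc / real k"
    using assms(2) k2 by (simp add: divide_strict_right_mono)
  also have "q * ?cc / real k = 1 - ?cc - ?X" using assms(2) k2 by (simp add: q_def field_simps)
  finally show ?thesis by (simp add: XsS)
qed


lemma Xs_le1: "l \<le> t \<Longrightarrow> Xs l \<le> 1"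
proof (induction l)
  case 0 then show ?case by simp
next
  case (Suc l)
  have cp: "c (Suc l) > 0" using cpos[of "Suc l"] Suc by simp
  show ?case
  proof (cases "nn (Suc l) > 0")
    case True
    have "c (Suc l) / real k \<le> c (Suc l)" using cp k2
      by (simp add: divide_le_eq)
    then show ?thesis using factA[OF True cp] by linarith
  next
    case False then show ?thesis using Suc by (simp add: XsS)
  qed
qed

definition N where "N = cnt t"
definition stg where "stg j = (LEAST l. j < cnt l)"

lemma stg_eq: assumes "cnt l \<le> j" "j < cnt (Suc l)" shows "stg j = Suc l"
  unfolding stg_def
proof (rule Least_equality)
  show "j < cnt (Suc l)" by fact
  fix y assume "j < cnt y"
  show "Suc l \<le> y"
  proof (rule ccontr)
    assume "\<not> Suc l \<le> y"
    then have "cnt y \<le> cnt l" by (intro cnt_mono) simp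
    then show False using assms \<open>j < cnt y\<close> by linarith
  qed
qed

lemma stg_range: assumes "j < N"
  shows "1 \<le> stg j" "stg j \<le> t" "cnt (stg j - 1) \<le> j" "j < cnt (stg j)"
proof -
  have ex: "j < cnt t" using assms by (simp add: N_def)
  show a: "j < cnt (stg j)" unfolding stg_def by (rule LeastI[of _ t]) (rule ex)
  show "stg j \<le> t" unfolding stg_def by (rule Least_le) (rule ex)
  show b: "1 \<le> stg j" using a by (cases "stg j") auto
  have "stg j - 1 < stg j" using b by simp
  then have "\<not> j < cnt (stg j - 1)" unfolding stg_def by (rule not_less_Least)
  then show "cnt (stg j - 1) \<le> j" by simp
qed

definition wt where "wt j = c (stg j) / real k"

lemma wt_pos: "j < N \<Longrightarrow> wt j > 0"
  unfolding wt_def using stg_range[of j] cpos[of "stg j"] k2 by simp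

lemma sum_part:
  assumes "(\<Sum>j<cnt l. wt j) = Xs l" "Suc l \<le> t" "i \<le> nn (Suc l)"
  shows "(\<Sum>j<cnt l + i. wt j) = Xs l + real i * c (Suc l) / real k"
  using assms(3)
proof (induction i)
  case 0 then show ?case using assms(1) by simp
next
  case (Suc i)
  have "stg (cnt l + i) = Suc l"
    by (rule stg_eq) (use Suc.prems in \<open>auto simp: cntS\<close>)
  then have "wt (cnt l + i) = c (Suc l) / real k" by (simp add: wt_def)
  then show ?case using Suc by (simp add: add_divide_distrib distrib_right)
qed

lemma sum_cnt: "l \<le> t \<Longrightarrow> (\<Sum>j<cnt l. wt j) = Xs l"
proof (induction l)
  case 0 then show ?case by simp
next
  case (Suc l)
  then show ?case using sum_part[of l "nn (Suc l)"] by (simp add: cntS XsS)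
qed

definition Oset where "Oset = (\<lambda>i. 2*i) ` {..<k}"
definition Bset where "Bset = (\<lambda>j. 2*j+1) ` {..<N}"
definition VV where "VV = Oset \<union> Bset"
definition Gp where "Gp p = (\<lambda>j. 2*j+1) ` {..<p}"
definition mS where "mS S = card (S \<inter> Oset)"
definition xS where "xS S = (\<Sum>j \<in> {j. j < N \<and> 2*j+1 \<in> S}. wt j)"
definition ff where "ff S = real (mS S) / real k + (1 - real (mS S) / real k) * xS S"

lemma finV: "finite VV" by (simp add: VV_def Oset_def Bset_def)

lemma xS_nonneg: "xS S \<ge> 0"
  unfolding xS_def by (rule sum_nonneg) (simp add: wt_pos less_imp_le)

lemma xS_mono: "A \<subseteq> B \<Longrightarrow> xS A \<le> xS B"
  unfolding xS_def by (rule sum_mono2) (auto simp: wt_pos less_imp_le)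

lemma xS_le1: "xS S \<le> 1"
proof -
  have "xS S \<le> (\<Sum>j<N. wt j)" unfolding xS_def
    by (rule sum_mono2) (auto simp: wt_pos less_imp_le)
  also have "\<dots> = Xs t" using sum_cnt[of t] by (simp add: N_def)
  also have "\<dots> \<le> 1" by (rule Xs_le1) simp
  finally show ?thesis .
qed

lemma cardO: "card Oset = k"
  unfolding Oset_def by (subst card_image) (auto simp: inj_on_def)

lemma mS_le: "mS S \<le> k"
  unfolding mS_def using cardO by (metis card_mono finite_Int finite_imageI finite_lessThan Oset_def inf_le2)

lemma mS_mono: "A \<subseteq> B \<Longrightarrow> mS A \<le> mS B"
  unfolding mS_def Oset_def by (intro card_mono) auto

lemma ff_O: assumes "e \<in> Oset" "e \<notin> A" shows "marg ff A e = (1 - xS A) / real k"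
proof -
  have m: "mS (A \<union> {e}) = mS A + 1"
  proof -
    have "(A \<union> {e}) \<inter> Oset = insert e (A \<inter> Oset)" using assms by auto
    moreover have "finite (A \<inter> Oset)" by (simp add: Oset_def)
    ultimately show ?thesis using assms unfolding mS_def by simp
  qed
  have x: "xS (A \<union> {e}) = xS A"
  proof -
    obtain i where i: "e = 2*i" using assms(1) unfolding Oset_def by auto
    have ne: "\<And>j. 2*j+1 \<noteq> e" unfolding i by presburger
    have "{j. j < N \<and> 2*j+1 \<in> A \<union> {e}} = {j. j < N \<and> 2*j+1 \<in> A}"
      using ne by blast
    then show ?thesis by (simp add: xS_def)
  qed
  show ?thesis unfolding marg_def ff_def m x using k2 by (simp add: field_simps)
qed

lemma ff_B: assumes "j < N" "2*j+1 \<notin> A" shows "marg ff A (2*j+1) = (1 - real (mS A) / real k) * wt j"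
proof -
  have m: "mS (A \<union> {2*j+1}) = mS A"
  proof -
    have "2*j+1 \<notin> Oset" unfolding Oset_def by (auto, presburger)
    then have "(A \<union> {2*j+1}) \<inter> Oset = A \<inter> Oset" by blast
    then show ?thesis by (simp add: mS_def)
  qed
  have x: "xS (A \<union> {2*j+1}) = xS A + wt j"
  proof -
    have "{j'. j' < N \<and> 2*j'+1 \<in> A \<union> {2*j+1}} = insert j {j'. j' < N \<and> 2*j'+1 \<in> A}"
      using assms by auto
    then show ?thesis using assms by (simp add: xS_def)
  qed
  show ?thesis unfolding marg_def ff_def m x by (simp add: field_simps)
qed

lemma V_cases: "e \<in> VV \<Longrightarrow> e \<in> Oset \<or> (\<exists>j<N. e = 2*j+1)"
  unfolding VV_def Bset_def by auto

lemma ff_nonneg: "ff S \<ge> 0"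
proof -
  have "real (mS S) / real k \<le> 1" using mS_le[of S] k2 by (simp add: divide_le_eq)
  then show ?thesis unfolding ff_def using xS_nonneg[of S] by simp
qed

lemma ff_le1: "ff S \<le> 1"
proof -
  have a: "real (mS S) / real k \<le> 1" using mS_le[of S] k2 by (simp add: divide_le_eq)
  have "(1 - real (mS S) / real k) * xS S \<le> (1 - real (mS S) / real k) * 1"
    using a xS_le1[of S] by (intro mult_left_mono) auto
  then show ?thesis unfolding ff_def by simp
qed

lemma ff_props: "nonneg_set_fun VV ff" "monotone_sf VV ff" "submodular VV ff"
proof -
  show "nonneg_set_fun VV ff" unfolding nonneg_set_fun_def using ff_nonneg by simp
  show "monotone_sf VV ff" unfolding monotone_sf_def
  proof (intro allI impI)
    fix A e assume h: "A \<subseteq> VV \<and> e \<in> VV \<and> e \<notin> A"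
    show "marg ff A e \<ge> 0"
    proof (cases "e \<in> Oset")
      case True then show ?thesis using ff_O[of e A] h xS_le1[of A] by simp
    next
      case False
      then obtain j where j: "j < N" "e = 2*j+1" using V_cases h by blast
      have "real (mS A) / real k \<le> 1" using mS_le[of A] k2 by (simp add: divide_le_eq)
      then show ?thesis using ff_B[of j A] h j wt_pos[of j] by simp
    qed
  qed
  show "submodular VV ff" unfolding submodular_def
  proof (intro allI impI)
    fix A B e assume h: "A \<subseteq> B \<and> B \<subseteq> VV \<and> e \<in> VV \<and> e \<notin> B"
    show "marg ff A e \<ge> marg ff B e"
    proof (cases "e \<in> Oset")
      case True
      have "xS A \<le> xS B" using h xS_mono by blast
      moreover have "e \<notin> A" using h by blast
      ultimately show ?thesis using ff_O[of e A] ff_O[of e B] h True k2 by (simp add: divide_right_mono)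
    next
      case False
      then obtain j where j: "j < N" "e = 2*j+1" using V_cases h by blast
      have "mS A \<le> mS B" using h mS_mono by blast
      then have "real (mS A) / real k \<le> real (mS B) / real k" using k2 by (simp add: divide_right_mono)
      moreover have "2*j+1 \<notin> A" "2*j+1 \<notin> B" using h j by blast+
      ultimately show ?thesis using ff_B[of j A] ff_B[of j B] j wt_pos[of j]
        by (simp add: mult_right_mono)
    qed
  qed
qed

lemma opt1: "opt_val VV ff k = 1"
  unfolding opt_val_def
proof (rule Max_eqI)
  show "finite (ff ` {A. A \<subseteq> VV \<and> card A \<le> k})" using finV by simp
  show "\<And>y. y \<in> ff ` {A. A \<subseteq> VV \<and> card A \<le> k} \<Longrightarrow> y \<le> 1" using ff_le1 by auto
  have "mS Oset = k" using cardO by (simp add: mS_def)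
  then have "ff Oset = 1" using k2 by (simp add: ff_def)
  moreover have "Oset \<in> {A. A \<subseteq> VV \<and> card A \<le> k}" using cardO by (auto simp: VV_def)
  ultimately show "1 \<in> ff ` {A. A \<subseteq> VV \<and> card A \<le> k}" by (metis image_eqI)
qed


lemma Gp_Suc: "Gp (Suc p) = insert (2*p+1) (Gp p)"
  by (auto simp: Gp_def lessThan_Suc)

lemma card_Gp: "card (Gp p) = p"
  unfolding Gp_def by (subst card_image) (auto simp: inj_on_def)

lemma Gp_sub: "p \<le> N \<Longrightarrow> Gp p \<subseteq> VV"
  by (auto simp: Gp_def VV_def Bset_def)

lemma mS_Gp: "mS (Gp p) = 0"
proof -
  have "Gp p \<inter> Oset = {}" unfolding Gp_def Oset_def by (auto, presburger)
  then show ?thesis by (simp add: mS_def)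
qed

lemma xS_Gp: "p \<le> N \<Longrightarrow> xS (Gp p) = (\<Sum>j<p. wt j)"
proof -
  assume p: "p \<le> N"
  have "{j. j < N \<and> 2*j+1 \<in> Gp p} = {..<p}" using p by (auto simp: Gp_def)
  then show ?thesis by (simp add: xS_def)
qed

lemma ff_Gp: "p \<le> N \<Longrightarrow> ff (Gp p) = (\<Sum>j<p. wt j)"
  by (simp add: ff_def mS_Gp xS_Gp)

lemma Gp_notin: "2*(j::nat)+1 \<in> Gp p \<longleftrightarrow> j < p"
  by (auto simp: Gp_def)

lemma Gp_notin': "Suc (2*(j::nat)) \<in> Gp p \<longleftrightarrow> j < p"
  using Gp_notin by simp

definition al where "al l = c l * opt_val VV ff k / real k"

lemma al_eq: "al l = c l / real k" by (simp add: al_def opt1)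

lemma cnt_le_N: "l \<le> t \<Longrightarrow> cnt l \<le> N"
  unfolding N_def by (rule cnt_mono)

lemma step_add:
  assumes "Suc l \<le> t" "i < nn (Suc l)"
  shows "thr_step VV ff k t al (Suc l, Gp (cnt l + i)) (Suc l, Gp (cnt l + Suc i))"
proof -
  let ?p = "cnt l + i"
  have lt: "?p < cnt (Suc l)" using assms by (simp add: cntS)
  have pN: "?p < N" using lt cnt_le_N[OF assms(1)] by linarith
  have "Gp (cnt l + Suc i) = insert (2*?p+1) (Gp ?p)" using Gp_Suc[of ?p] by simp
  moreover have "thr_step VV ff k t al (Suc l, Gp ?p) (Suc l, insert (2*?p+1) (Gp ?p))"
  proof (rule thr_step.add)
    show "1 \<le> Suc l" "Suc l \<le> t" using assms by auto
    show "card (Gp ?p) < k" using lt cnt_le_k[of "Suc l"] by (simp add: card_Gp)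
    have "2*?p+1 \<in> Bset" unfolding Bset_def using pN by blast
    then show "2*?p+1 \<in> VV - Gp ?p" unfolding VV_def using Gp_notin[of ?p ?p] by blast
    have "stg ?p = Suc l" by (rule stg_eq) (use lt in auto)
    then have "wt ?p = c (Suc l) / real k" by (simp add: wt_def)
    moreover have "2*?p+1 \<notin> Gp ?p" using Gp_notin[of ?p ?p] by blast
    ultimately have "marg ff (Gp ?p) (2*?p+1) = c (Suc l) / real k"
      using ff_B[OF pN] by (simp add: mS_Gp)
    then show "al (Suc l) \<le> marg ff (Gp ?p) (2*?p+1)" by (simp add: al_eq)
  qed
  ultimately show ?thesis by simp
qed

lemma stage_run:
  assumes "Suc l \<le> t" "i \<le> nn (Suc l)"
  shows "(thr_step VV ff k t al)\<^sup>*\<^sup>* (Suc l, Gp (cnt l)) (Suc l, Gp (cnt l + i))"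
  using assms(2)
proof (induction i)
  case 0 then show ?case by simp
next
  case (Suc i)
  then show ?case using step_add[OF assms(1), of i]
    by (meson Suc_leD Suc_le_lessD rtranclp.rtrancl_into_rtrancl)
qed

lemma advance:
  assumes "Suc l \<le> t"
  shows "thr_step VV ff k t al (Suc l, Gp (cnt (Suc l))) (Suc (Suc l), Gp (cnt (Suc l)))"
proof (rule thr_step.advance)
  show "1 \<le> Suc l" "Suc l \<le> t" using assms by auto
  let ?G = "Gp (cnt (Suc l))"
  let ?cc = "c (Suc l)"
  have ccp: "?cc > 0" using cpos[of "Suc l"] assms by simp
  show "\<not> (card ?G < k \<and> (\<exists>e\<in>VV - ?G. al (Suc l) \<le> marg ff ?G e))"
  proof
    assume h: "card ?G < k \<and> (\<exists>e\<in>VV - ?G. al (Suc l) \<le> marg ff ?G e)"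
    then have X: "Xs (Suc l) > 1 - ?cc" using factB ccp by (simp add: card_Gp)
    have cN: "cnt (Suc l) \<le> N" using cnt_le_N assms by blast
    have xG: "xS ?G = Xs (Suc l)" using xS_Gp[OF cN] sum_cnt[OF assms] by simp
    obtain e where e: "e \<in> VV" "e \<notin> ?G" "al (Suc l) \<le> marg ff ?G e" using h by blast
    show False
    proof (cases "e \<in> Oset")
      case True
      then have "marg ff ?G e = (1 - Xs (Suc l)) / real k" using ff_O e xG by simp
      also have "\<dots> < ?cc / real k" using X k2 by (simp add: divide_strict_right_mono)
      finally show False using e(3) by (simp add: al_eq)
    next
      case False
      then obtain j where j: "j < N" "e = 2*j+1" using V_cases e by blast
      have jge: "cnt (Suc l) \<le> j" using e(2) j Gp_notin[of j "cnt (Suc l)"] by simp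
      define l' where "l' = stg j"
      have r: "1 \<le> l'" "l' \<le> t" "cnt (l' - 1) \<le> j" "j < cnt l'" using stg_range[OF j(1)] by (auto simp: l'_def)
      have gt: "Suc l < l'"
      proof (rule ccontr)
        assume "\<not> Suc l < l'"
        then have "cnt l' \<le> cnt (Suc l)" by (intro cnt_mono) simp
        then show False using r jge by linarith
      qed
      have l'S: "l' = Suc (l' - 1)" using r by simp
      have "cnt l' = cnt (l' - 1) + nn l'" using cntS[of "l' - 1"] l'S by simp
      then have "nn l' > 0" using r by linarith
      then have nx: "\<not> Xs (l' - 1) > 1 - c l'" by (auto simp: nn_def nst_def)
      have "Xs (Suc l) \<le> Xs (l' - 1)" using gt r by (intro Xs_mono) auto
      then have cl: "c l' < ?cc" using X nx by linarith
      have "marg ff ?G e = wt j" using ff_B[OF j(1)] e(2) j(2) by (simp add: mS_Gp)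
      also have "\<dots> = c l' / real k" by (simp add: wt_def l'_def)
      also have "\<dots> < ?cc / real k" using cl k2 by (simp add: divide_strict_right_mono)
      finally show False using e(3) by (simp add: al_eq)
    qed
  qed
qed

lemma all_run: "l \<le> t \<Longrightarrow> (thr_step VV ff k t al)\<^sup>*\<^sup>* (1, {}) (Suc l, Gp (cnt l))"
proof (induction l)
  case 0 then show ?case by (simp add: Gp_def)
next
  case (Suc l)
  have a: "(thr_step VV ff k t al)\<^sup>*\<^sup>* (1, {}) (Suc l, Gp (cnt l))" using Suc by simp
  have b: "(thr_step VV ff k t al)\<^sup>*\<^sup>* (Suc l, Gp (cnt l)) (Suc l, Gp (cnt (Suc l)))"
    using stage_run[OF Suc.prems, of "nn (Suc l)"] by (simp add: cntS)
  have c: "thr_step VV ff k t al (Suc l, Gp (cnt (Suc l))) (Suc (Suc l), Gp (cnt (Suc l)))"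
    by (rule advance) (use Suc.prems in auto)
  show ?case using a b c by (meson rtranclp.rtrancl_into_rtrancl rtranclp_trans)
qed

lemma run_output: "thr_output VV ff k t al (Gp N)"
  unfolding thr_output_def N_def using all_run[of t] by simp

lemma ff_out: "ff (Gp N) = Xs t"
  using ff_Gp[of N] sum_cnt[of t] by (simp add: N_def)


definition sk where "sk = real k / (real k - 1)"
definition PP where "PP l = (\<Prod>i\<in>{1..l}. 1 + sk * real (nn i) / real k)"

lemma sk_pos: "sk > 0" using k2 by (simp add: sk_def)

lemma g_step:
  assumes "Suc l \<le> t"
  shows "(1 - Xs (Suc l)) * (1 + sk * real (nn (Suc l)) / real k) \<ge> 1 - Xs l"
proof (cases "nn (Suc l) > 0")
  case False then show ?thesis by (simp add: XsS)
next
  case True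
  let ?cc = "c (Suc l)" and ?n = "real (nn (Suc l))"
  have ccp: "?cc > 0" using cpos[of "Suc l"] assms by simp
  have A: "1 - Xs (Suc l) \<ge> ?cc - ?cc / real k" using factA[OF True ccp] by linarith
  have "?cc - ?cc / real k = ?cc * (real k - 1) / real k" using k2 by (simp add: field_simps)
  then have "(1 - Xs (Suc l)) * sk \<ge> ?cc * (real k - 1) / real k * sk"
    using A sk_pos by (intro mult_right_mono) auto
  also have "?cc * (real k - 1) / real k * sk = ?cc" using k2 by (simp add: sk_def field_simps)
  finally have B: "(1 - Xs (Suc l)) * sk \<ge> ?cc" .
  have "(1 - Xs (Suc l)) * sk * (?n / real k) \<ge> ?cc * (?n / real k)"
    using B k2 by (intro mult_right_mono) auto
  moreover have "(1 - Xs (Suc l)) * (1 + sk * ?n / real k) = (1 - Xs (Suc l)) + (1 - Xs (Suc l)) * sk * (?n / real k)"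
    by (simp add: distrib_left mult.assoc)
  moreover have "?cc * (?n / real k) = ?n * ?cc / real k" by simp
  ultimately have "(1 - Xs (Suc l)) * (1 + sk * ?n / real k) \<ge> (1 - Xs (Suc l)) + ?n * ?cc / real k"
    by linarith
  then show ?thesis by (simp add: XsS)
qed

lemma PP_Suc: "PP (Suc l) = PP l * (1 + sk * real (nn (Suc l)) / real k)"
  unfolding PP_def by (simp add: prod.nat_ivl_Suc' mult.commute)

lemma PP_nonneg: "PP l \<ge> 0"
  unfolding PP_def using sk_pos by (intro prod_nonneg) auto

lemma gP: "l \<le> t \<Longrightarrow> (1 - Xs l) * PP l \<ge> 1"
proof (induction l)
  case 0 then show ?case by (simp add: PP_def)
next
  case (Suc l)
  have IH: "(1 - Xs l) * PP l \<ge> 1" using Suc by simp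
  have "(1 - Xs l) * PP l \<le> (1 - Xs (Suc l)) * (1 + sk * real (nn (Suc l)) / real k) * PP l"
    using g_step[OF Suc.prems] PP_nonneg[of l] by (intro mult_right_mono) auto
  also have "\<dots> = (1 - Xs (Suc l)) * PP (Suc l)" by (simp add: PP_Suc ac_simps)
  finally show ?case using IH by linarith
qed

lemma sum_nn: "(\<Sum>i\<in>{1..l}. nn i) = cnt l"
  by (induction l) (auto simp: cntS sum.nat_ivl_Suc')

lemma PP_bound: "PP t \<le> (1 + sk / real t) ^ t"
proof (cases "t = 0")
  case True then show ?thesis by (simp add: PP_def)
next
  case False
  let ?x = "\<lambda>i. 1 + sk * real (nn i) / real k"
  have xpos: "\<And>i. ?x i > 0" using sk_pos by (simp add: add_pos_nonneg)
  have am: "(\<Sum>i\<in>{1..t}. ?x i / card {1..t}) \<ge> (\<Prod>i\<in>{1..t}. ?x i) powr (1 / card {1..t})"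
    by (rule arith_geom_mean) (use False xpos in \<open>auto intro: less_imp_le\<close>)
  have "(\<Sum>i\<in>{1..t}. ?x i / card {1..t}) = (\<Sum>i\<in>{1..t}. ?x i) / real t"
    by (simp add: sum_divide_distrib)
  also have "(\<Sum>i\<in>{1..t}. ?x i) = real t + sk / real k * real (\<Sum>i\<in>{1..t}. nn i)"
    by (simp add: sum.distrib sum_distrib_left)
  also have "\<dots> \<le> real t + sk" 
  proof -
    have "real (\<Sum>i\<in>{1..t}. nn i) \<le> real k" using sum_nn[of t] cnt_le_k[of t] by simp
    then have "sk / real k * real (\<Sum>i\<in>{1..t}. nn i) \<le> sk / real k * real k"
      using sk_pos k2 by (intro mult_left_mono) auto
    then show ?thesis using k2 by simp
  qed
  finally have "(\<Prod>i\<in>{1..t}. ?x i) powr (1 / real t) \<le> (real t + sk) / real t"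
    using am False by (simp add: divide_right_mono)
  also have "(real t + sk) / real t = 1 + sk / real t" using False by (simp add: field_simps)
  finally have r: "PP t powr (1 / real t) \<le> 1 + sk / real t" by (simp add: PP_def)
  have pp: "PP t > 0" unfolding PP_def using xpos by (intro prod_pos) auto
  have "PP t = (PP t powr (1 / real t)) ^ t"
    using pp False by (simp add: powr_realpow[symmetric] powr_powr)
  also have "\<dots> \<le> (1 + sk / real t) ^ t"
    using r by (intro power_mono) auto
  finally show ?thesis .
qed

lemma final_bound: "ff (Gp N) \<le> 1 - 1 / (1 + sk / real t) ^ t"
proof -
  have pp: "PP t > 0"
  proof -
    have "(1 - Xs t) * PP t \<ge> 1" by (rule gP) simp
    then show ?thesis using PP_nonneg[of t] by (cases "PP t = 0") auto
  qed
  have "1 - Xs t \<ge> 1 / PP t" using gP[of t] pp by (simp add: divide_le_eq)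
  moreover have "1 / PP t \<ge> 1 / (1 + sk / real t) ^ t"
    using PP_bound pp by (intro divide_left_mono) auto
  ultimately show ?thesis using ff_out by linarith
qed

end

lemma L_eq: "t \<ge> 1 \<Longrightarrow> 1 / (1 + 1 / real t) ^ t = (1 - 1 / real (t + 1)) ^ t"
proof -
  assume t: "t \<ge> 1"
  have "1 / (1 + 1 / real t) = 1 - 1 / real (t + 1)" using t by (simp add: field_simps)
  then show ?thesis by (metis power_one_over)
qed

theorem theorem4:
  fixes t :: nat and \<epsilon> :: real
  assumes "t \<ge> 1" and "\<epsilon> > 0"
  shows "\<exists>k0::nat. \<forall>k\<ge>k0. \<forall>c :: nat \<Rightarrow> real.
     (\<forall>l. 1 \<le> l \<and> l < t \<longrightarrow> c (Suc l) \<le> c l) \<and> c t > 0 \<longrightarrow>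
     (\<exists>(V :: nat set) (f :: nat set \<Rightarrow> real).
        finite V \<and> nonneg_set_fun V f \<and> monotone_sf V f \<and> submodular V f \<and>
        opt_val V f k > 0 \<and>
        (\<exists>G. thr_output V f k t (\<lambda>l. c l * opt_val V f k / real k) G \<and>
             f G \<le> (1 - (1 - 1 / real (t + 1)) ^ t + \<epsilon>) * opt_val V f k))"
proof -
  define L where "L = (1 - 1 / real (t + 1)) ^ t"
  have tp: "real t > 0" using assms(1) by simp
  have ne: "(1 + (1 + 0) / real t) ^ t \<noteq> 0" using tp
    by (metis add_pos_pos divide_pos_pos less_numeral_extra(1) power_not_zero add_0_right less_irrefl)
  have lim: "(\<lambda>k. 1 / (1 + (1 + 2 / real k) / real t) ^ t) \<longlonglongrightarrow> 1 / (1 + (1 + 0) / real t) ^ t"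
    using tp by (intro tendsto_intros lim_const_over_n ne) auto
  then have "\<forall>\<^sub>F k in sequentially. dist (1 / (1 + (1 + 2 / real k) / real t) ^ t) (1 / (1 + (1 + 0) / real t) ^ t) < \<epsilon>"
    using assms(2) by (rule tendstoD)
  then obtain K where K: "\<And>k. k \<ge> K \<Longrightarrow> dist (1 / (1 + (1 + 2 / real k) / real t) ^ t) (1 / (1 + (1 + 0) / real t) ^ t) < \<epsilon>"
    unfolding eventually_sequentially by blast
  have LL: "1 / (1 + (1 + 0) / real t) ^ t = L" using L_eq[OF assms(1)] by (simp add: L_def)
  show ?thesis
  proof (intro exI[of _ "max 2 K"] allI impI)
    fix k :: nat and c :: "nat \<Rightarrow> real"
    assume k: "max 2 K \<le> k"
    assume hc: "(\<forall>l. 1 \<le> l \<and> l < t \<longrightarrow> c (Suc l) \<le> c l) \<and> c t > 0"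
    interpret cons c k t
      by unfold_locales (use hc k in auto)
    have close: "1 / (1 + (1 + 2 / real k) / real t) ^ t > L - \<epsilon>"
      using K[of k] k LL by (auto simp: dist_real_def)
    have sk_le: "sk \<le> 1 + 2 / real k"
    proof -
      have kk: "real k \<ge> 2" using k by simp
      have "real k * real k \<le> (real k - 1) * (real k + 2)" using kk by (simp add: algebra_simps)
      then show ?thesis using kk by (simp add: sk_def field_simps)
    qed
    have "(1 + sk / real t) ^ t \<le> (1 + (1 + 2 / real k) / real t) ^ t"
      using sk_le sk_pos tp by (intro power_mono) (auto simp: divide_right_mono add_nonneg_nonneg less_imp_le)
    moreover have "(1 + sk / real t) ^ t > 0" using sk_pos tp by (intro zero_less_power add_pos_pos divide_pos_pos) auto
    ultimately have "1 / (1 + sk / real t) ^ t \<ge> 1 / (1 + (1 + 2 / real k) / real t) ^ t"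
      by (intro divide_left_mono) auto
    then have fb: "ff (Gp N) \<le> 1 - L + \<epsilon>" using final_bound close by linarith
    show "\<exists>(V :: nat set) (f :: nat set \<Rightarrow> real).
        finite V \<and> nonneg_set_fun V f \<and> monotone_sf V f \<and> submodular V f \<and>
        opt_val V f k > 0 \<and>
        (\<exists>G. thr_output V f k t (\<lambda>l. c l * opt_val V f k / real k) G \<and>
             f G \<le> (1 - (1 - 1 / real (t + 1)) ^ t + \<epsilon>) * opt_val V f k)"
    proof (intro exI conjI)
      show "finite VV" by (rule finV)
      show "nonneg_set_fun VV ff" "monotone_sf VV ff" "submodular VV ff" by (rule ff_props)+
      show "opt_val VV ff k > 0" by (simp add: opt1)
      show "thr_output VV ff k t (\<lambda>l. c l * opt_val VV ff k / real k) (Gp N)"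
        using run_output unfolding al_def[abs_def] .
      show "ff (Gp N) \<le> (1 - (1 - 1 / real (t + 1)) ^ t + \<epsilon>) * opt_val VV ff k"
        using fb by (simp add: opt1 L_def)
    qed
  qed
qed

end
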